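(* Let $\mathbb G=(\mathbb V,\mathbb E)$ be a connected bipartite locally finite graph, $V$ a parity potential, $r\in\mathbb V$, $\Lambda_n$ the set of vertices at graph distance at most $n$ from $r$, and $\phi$ an admissible height function. Let $m_n=\min_{\partial\Lambda_n}\phi$, define $\psi_n:\mathbb V\to\mathbb Z\cup\{-\infty\}$ by $\psi_n(x)=-\infty$ if $x\notin\Lambda_{n+1}$ and $\psi_n(x)=m_n+d_{\mathbb G}(x,\partial\Lambda_n)$ if $x\in\Lambda_{n+1}$, and let $\phi_n=\phi\vee\psi_n$ (pointwise maximum). Then for every edge $xy\in\mathbb E$, $|\phi(y)-\phi(x)|\ge|\phi_n(y)-\phi_n(x)|\in2\mathbb Z+1$; in particular $\phi_n$ is admissible and $\phi_n\ge\phi$.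
   Context: A parity potential is a symmetric $V:\mathbb Z\to\mathbb R\cup\{\infty\}$ with $V(x)=\infty$ for all even $x$, $V(\pm1)<\infty$, and whose restriction to the odd integers is convex and non-constant. A height function $\phi:\mathbb V\to\mathbb Z$ is admissible if $V(\phi(y)-\phi(x))<\infty$ for every edge $xy$. $\partial\Lambda$ denotes the set of vertices not in $\Lambda$ adjacent to $\Lambda$; $d_{\mathbb G}$ is the graph distance. *)

theory Defs
  imports "HOL-Analysis.Analysis"
begin

definition sym_graph :: "('v \<Rightarrow> 'v \<Rightarrow> bool) \<Rightarrow> bool" where
  "sym_graph E \<longleftrightarrow> (\<forall>x y. E x y \<longrightarrow> E y x)"

definition connected_graph :: "('v \<Rightarrow> 'v \<Rightarrow> bool) \<Rightarrow> bool" where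
  "connected_graph E \<longleftrightarrow> (\<forall>x y. E\<^sup>*\<^sup>* x y)"

definition bipartite_graph :: "('v \<Rightarrow> 'v \<Rightarrow> bool) \<Rightarrow> bool" where
  "bipartite_graph E \<longleftrightarrow> (\<exists>c :: 'v \<Rightarrow> bool. \<forall>x y. E x y \<longrightarrow> c x \<noteq> c y)"

definition locally_finite :: "('v \<Rightarrow> 'v \<Rightarrow> bool) \<Rightarrow> bool" where
  "locally_finite E \<longleftrightarrow> (\<forall>x. finite {y. E x y})"

definition gdist :: "('v \<Rightarrow> 'v \<Rightarrow> bool) \<Rightarrow> 'v \<Rightarrow> 'v \<Rightarrow> nat" where
  "gdist E x y = (LEAST n. (E ^^ n) x y)"

definition gdist_set :: "('v \<Rightarrow> 'v \<Rightarrow> bool) \<Rightarrow> 'v \<Rightarrow> 'v set \<Rightarrow> nat" where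
  "gdist_set E x A = (LEAST n. \<exists>a\<in>A. (E ^^ n) x a)"

definition gball :: "('v \<Rightarrow> 'v \<Rightarrow> bool) \<Rightarrow> 'v \<Rightarrow> nat \<Rightarrow> 'v set" where
  "gball E r n = {x. gdist E r x \<le> n}"

definition vboundary :: "('v \<Rightarrow> 'v \<Rightarrow> bool) \<Rightarrow> 'v set \<Rightarrow> 'v set" where
  "vboundary E L = {x. x \<notin> L \<and> (\<exists>y\<in>L. E x y)}"

text \<open>Potentials V : Z -> R \<union> {\<infinity>}, modelled in ereal with value -\<infinity> excluded.\<close>
definition parity_potential :: "(int \<Rightarrow> ereal) \<Rightarrow> bool" where
  "parity_potential V \<longleftrightarrow>
     (\<forall>x. V x \<noteq> -\<infinity>) \<and>
     (\<forall>x. V (-x) = V x) \<and>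
     (\<forall>x. even x \<longrightarrow> V x = \<infinity>) \<and>
     V 1 < \<infinity> \<and> V (-1) < \<infinity> \<and>
     (\<forall>a b c. odd a \<longrightarrow> odd b \<longrightarrow> odd c \<longrightarrow> a < b \<longrightarrow> b < c \<longrightarrow>
        ereal (of_int (c - a)) * V b \<le> ereal (of_int (c - b)) * V a + ereal (of_int (b - a)) * V c) \<and>
     (\<exists>a b. odd a \<and> odd b \<and> V a \<noteq> V b)"

definition admissible :: "('v \<Rightarrow> 'v \<Rightarrow> bool) \<Rightarrow> (int \<Rightarrow> ereal) \<Rightarrow> ('v \<Rightarrow> int) \<Rightarrow> bool" where
  "admissible E V \<phi> \<longleftrightarrow> (\<forall>x y. E x y \<longrightarrow> V (\<phi> y - \<phi> x) < \<infinity>)"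

definition m_n :: "('v \<Rightarrow> 'v \<Rightarrow> bool) \<Rightarrow> 'v \<Rightarrow> ('v \<Rightarrow> int) \<Rightarrow> nat \<Rightarrow> int" where
  "m_n E r \<phi> n = Min (\<phi> ` vboundary E (gball E r n))"

definition phi_n :: "('v \<Rightarrow> 'v \<Rightarrow> bool) \<Rightarrow> 'v \<Rightarrow> ('v \<Rightarrow> int) \<Rightarrow> nat \<Rightarrow> 'v \<Rightarrow> int" where
  "phi_n E r \<phi> n x =
     (if x \<in> gball E r (n + 1)
      then max (\<phi> x) (m_n E r \<phi> n + int (gdist_set E x (vboundary E (gball E r n))))
      else \<phi> x)"

end

theory Submission
  imports Defs
begin

lemma walk_ex: "connected_graph E \<Longrightarrow> \<exists>k. (E ^^ k) x y"
  unfolding connected_graph_def by (meson rtranclp_imp_relpowp)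

lemma gdist_walk: "connected_graph E \<Longrightarrow> (E ^^ gdist E x y) x y"
  unfolding gdist_def using walk_ex by (metis LeastI_ex)

lemma gdist_le: "(E ^^ k) x y \<Longrightarrow> gdist E x y \<le> k"
  unfolding gdist_def by (rule Least_le)

lemma gdist_step: "connected_graph E \<Longrightarrow> E x y \<Longrightarrow> gdist E r y \<le> gdist E r x + 1"
  using gdist_le[OF relpowp_Suc_I[OF gdist_walk]] by simp

lemma gds_walk: "connected_graph E \<Longrightarrow> A \<noteq> {} \<Longrightarrow> \<exists>a\<in>A. (E ^^ gdist_set E x A) x a"
proof -
  assume c: "connected_graph E" and A: "A \<noteq> {}"
  then obtain a where "a \<in> A" by blast
  with walk_ex[OF c, of x a] have "\<exists>k. \<exists>a\<in>A. (E ^^ k) x a" by blast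
  then show ?thesis unfolding gdist_set_def by (rule LeastI_ex)
qed

lemma gds_le: "(E ^^ k) x a \<Longrightarrow> a \<in> A \<Longrightarrow> gdist_set E x A \<le> k"
  unfolding gdist_set_def by (rule Least_le) blast

lemma gds_step: "connected_graph E \<Longrightarrow> A \<noteq> {} \<Longrightarrow> E x y \<Longrightarrow> gdist_set E x A \<le> gdist_set E y A + 1"
proof -
  assume c: "connected_graph E" and A: "A \<noteq> {}" and e: "E x y"
  from gds_walk[OF c A, of y] obtain a where a: "a \<in> A" "(E ^^ gdist_set E y A) y a" by blast
  from gds_le[OF relpowp_Suc_I2[OF e a(2)] a(1)] show ?thesis by simp
qed

lemma gds_zero: "x \<in> A \<Longrightarrow> gdist_set E x A = 0"
  using gds_le[where k=0 and x=x and a=x and A=A and E=E] by simp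

lemma odd_edge:
  assumes "parity_potential V" "admissible E V \<phi>" "E x y"
  shows "odd (\<phi> y - \<phi> x)"
proof
  assume "even (\<phi> y - \<phi> x)"
  with assms(1) have "V (\<phi> y - \<phi> x) = \<infinity>" unfolding parity_potential_def by blast
  with assms(2,3) show False unfolding admissible_def by fastforce
qed

lemma walk_parity:
  assumes "parity_potential V" "admissible E V \<phi>"
  shows "(E ^^ k) x y \<Longrightarrow> even (\<phi> y - \<phi> x - int k)"
proof (induction k arbitrary: y)
  case 0
  then show ?case by (auto elim: relpowp_0_E)
next
  case (Suc k)
  from Suc.prems obtain z where z: "(E ^^ k) x z" "E z y" by (rule relpowp_Suc_E)
  have "even (\<phi> z - \<phi> x - int k)" using Suc.IH[OF z(1)] .
  moreover have "odd (\<phi> y - \<phi> z)" using odd_edge[OF assms z(2)] .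
  ultimately show ?case by presburger
qed

lemma finite_reach: "locally_finite E \<Longrightarrow> finite {x. (E ^^ k) r x}"
proof (induction k)
  case 0
  then show ?case by (auto elim: relpowp_0_E)
next
  case (Suc k)
  have "{x. (E ^^ Suc k) r x} \<subseteq> (\<Union>y\<in>{x. (E ^^ k) r x}. {z. E y z})"
    by (auto elim: relpowp_Suc_E)
  moreover have "finite (\<Union>y\<in>{x. (E ^^ k) r x}. {z. E y z})"
    using Suc unfolding locally_finite_def by blast
  ultimately show ?case by (rule finite_subset)
qed

lemma finite_ball: "connected_graph E \<Longrightarrow> locally_finite E \<Longrightarrow> finite (gball E r N)"
proof -
  assume c: "connected_graph E" and lf: "locally_finite E"
  have "gball E r N \<subseteq> (\<Union>k\<in>{..N}. {x. (E ^^ k) r x})"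
    unfolding gball_def using gdist_walk[OF c] by auto
  moreover have "finite (\<Union>k\<in>{..N}. {x. (E ^^ k) r x})" using finite_reach[OF lf] by blast
  ultimately show ?thesis by (rule finite_subset)
qed

lemma max_lemma:
  fixes a b c d :: int
  assumes "\<bar>b - d\<bar> \<le> 1" "1 \<le> \<bar>a - c\<bar>"
  shows "\<bar>max a b - max c d\<bar> \<le> \<bar>a - c\<bar>"
  using assms by (simp add: max_def abs_if split: if_splits) arith?

lemma V_fin:
  assumes P: "parity_potential V" and fin: "V d < \<infinity>" and od: "odd d'" "odd d"
    and le: "\<bar>d'\<bar> \<le> \<bar>d\<bar>"
  shows "V d' < \<infinity>"
proof (cases "\<bar>d'\<bar> = \<bar>d\<bar>")
  case True
  have sym: "\<And>x. V (-x) = V x" using P unfolding parity_potential_def by blast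
  from True have "d' = d \<or> d' = - d" by arith
  then show ?thesis using fin sym by auto
next
  case False
  have sym: "\<And>x. V (-x) = V x" using P unfolding parity_potential_def by blast
  have conv: "\<And>a b c. odd a \<Longrightarrow> odd b \<Longrightarrow> odd c \<Longrightarrow> a < b \<Longrightarrow> b < c \<Longrightarrow>
        ereal (of_int (c - a)) * V b \<le> ereal (of_int (c - b)) * V a + ereal (of_int (b - a)) * V c"
    using P unfolding parity_potential_def by blast
  have ninf: "\<And>x. V x \<noteq> -\<infinity>" using P unfolding parity_potential_def by blast
  let ?c = "\<bar>d\<bar>"
  have Vc: "V ?c < \<infinity>" using fin sym by (cases "d \<ge> 0") auto
  have Va: "V (- ?c) < \<infinity>" using Vc sym by simp
  obtain u where u: "V ?c = ereal u" using Vc ninf[of ?c] by (cases "V ?c") auto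
  obtain w where w: "V (- ?c) = ereal w" using Va ninf[of "-?c"] by (cases "V (-?c)") auto
  have oc: "odd ?c" using od(2) by simp
  have lt: "- ?c < d'" "d' < ?c" using False le by arith+
  have h: "ereal (of_int (?c - - ?c)) * V d' \<le> ereal (of_int (?c - d')) * V (-?c) + ereal (of_int (d' - - ?c)) * V ?c"
    using conv[of "-?c" d' ?c] oc od(1) lt by simp
  show ?thesis
  proof (rule ccontr)
    assume "\<not> V d' < \<infinity>"
    then have "V d' = \<infinity>" by simp
    moreover have "of_int (?c - - ?c) > (0::real)" using lt by simp
    ultimately have "ereal (of_int (?c - - ?c)) * V d' = \<infinity>" by simp
    with h u w show False by simp
  qed
qed

theorem mainTheorem6:
  fixes E :: "'v \<Rightarrow> 'v \<Rightarrow> bool" and V :: "int \<Rightarrow> ereal"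
    and r :: 'v and \<phi> :: "'v \<Rightarrow> int" and n :: nat
  assumes "sym_graph E" and "connected_graph E" and "bipartite_graph E"
    and "locally_finite E"
    and "parity_potential V"
    and "admissible E V \<phi>"
    and "vboundary E (gball E r n) \<noteq> {}"
  shows "(\<forall>x y. E x y \<longrightarrow>
            \<bar>phi_n E r \<phi> n y - phi_n E r \<phi> n x\<bar> \<le> \<bar>\<phi> y - \<phi> x\<bar> \<and>
            odd (phi_n E r \<phi> n y - phi_n E r \<phi> n x))
         \<and> admissible E V (phi_n E r \<phi> n)
         \<and> (\<forall>x. \<phi> x \<le> phi_n E r \<phi> n x)"
proof -
  note c = assms(2) and P = assms(5) and ad = assms(6)
  have sy: "\<And>x y. E x y \<Longrightarrow> E y x" using assms(1) unfolding sym_graph_def by blast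
  define A where "A = vboundary E (gball E r n)"
  have Ane: "A \<noteq> {}" using assms(7) A_def by simp
  define D where "D x = gdist_set E x A" for x
  define m where "m = m_n E r \<phi> n"
  define P' where "P' = phi_n E r \<phi> n"
  have P'_def2: "P' x = (if x \<in> gball E r (n+1) then max (\<phi> x) (m + int (D x)) else \<phi> x)" for x
    unfolding P'_def phi_n_def m_def D_def A_def by simp
  have Adist: "gdist E r a = n + 1" if "a \<in> A" for a
  proof -
    from that obtain z where z: "gdist E r z \<le> n" "E a z" "gdist E r a > n"
      unfolding A_def vboundary_def gball_def by auto
    have "gdist E r a \<le> gdist E r z + 1" using gdist_step[OF c sy[OF z(2)]] .
    with z show ?thesis by simp
  qed
  have Aball: "A \<subseteq> gball E r (n+1)" using Adist unfolding gball_def by auto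
  have finA: "finite A" using finite_subset[OF Aball finite_ball[OF c assms(4)]] .
  have mA: "m \<in> \<phi> ` A" unfolding m_def m_n_def A_def[symmetric] using finA Ane by simp
  have mle: "m \<le> \<phi> a" if "a \<in> A" for a unfolding m_def m_n_def A_def[symmetric]
    using finA that by simp
  have Apar: "even (\<phi> a - \<phi> r - int (n+1))" if "a \<in> A" for a
    using walk_parity[OF P ad gdist_walk[OF c, of r a]] Adist[OF that] by simp
  have psipar: "even (m + int (D x) - \<phi> x)" for x
  proof -
    from mA obtain a0 where a0: "a0 \<in> A" "m = \<phi> a0" by blast
    from gds_walk[OF c Ane, of x] obtain a where a: "a \<in> A" "(E ^^ D x) x a"
      unfolding D_def by blast
    have "even (\<phi> a - \<phi> x - int (D x))" using walk_parity[OF P ad a(2)] .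
    moreover have "even (\<phi> a0 - \<phi> r - int (n+1))" using Apar[OF a0(1)] .
    moreover have "even (\<phi> a - \<phi> r - int (n+1))" using Apar[OF a(1)] .
    ultimately show ?thesis using a0 by presburger
  qed
  have Ppar: "even (P' x - \<phi> x)" for x
    using psipar[of x] by (simp add: P'_def2 max_def)
  have Pge: "\<phi> x \<le> P' x" for x by (simp add: P'_def2)
  have Dstep: "\<bar>int (D y) - int (D x)\<bar> \<le> 1" if "E x y" for x y
    using gds_step[OF c Ane that] gds_step[OF c Ane sy[OF that]] unfolding D_def by arith
  have cross: "x \<in> A \<and> P' x = \<phi> x" if "E x y" "x \<in> gball E r (n+1)" "y \<notin> gball E r (n+1)" for x y
  proof -
    have "gdist E r y \<le> gdist E r x + 1" using gdist_step[OF c that(1)] .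
    with that have gx: "gdist E r x = n + 1" unfolding gball_def by simp
    obtain z where z: "(E ^^ n) r z" "E z x"
      using gdist_walk[OF c, of r x] gx by (auto elim: relpowp_Suc_E)
    have "gdist E r z \<le> n" using gdist_le[OF z(1)] .
    then have xA: "x \<in> A" unfolding A_def vboundary_def gball_def using gx sy[OF z(2)] by force
    have "D x = 0" unfolding D_def using gds_zero[OF xA] .
    then show ?thesis using xA mle[OF xA] that(2) by (simp add: P'_def2)
  qed
  have edge: "\<bar>P' y - P' x\<bar> \<le> \<bar>\<phi> y - \<phi> x\<bar>" if e: "E x y" for x y
  proof -
    have o: "odd (\<phi> y - \<phi> x)" using odd_edge[OF P ad e] .
    then have one: "1 \<le> \<bar>\<phi> y - \<phi> x\<bar>" by (cases "\<phi> y - \<phi> x = 0") auto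
    consider "x \<in> gball E r (n+1)" "y \<in> gball E r (n+1)"
      | "x \<notin> gball E r (n+1)" "y \<notin> gball E r (n+1)"
      | "x \<in> gball E r (n+1)" "y \<notin> gball E r (n+1)"
      | "x \<notin> gball E r (n+1)" "y \<in> gball E r (n+1)" by blast
    then show ?thesis
    proof cases
      case 1
      have "\<bar>(m + int (D y)) - (m + int (D x))\<bar> \<le> 1" using Dstep[OF e] by simp
      then show ?thesis using max_lemma[OF _ one] 1 by (simp add: P'_def2)
    next
      case 2 then show ?thesis by (simp add: P'_def2)
    next
      case 3 then show ?thesis using cross[OF e 3] by (simp add: P'_def2)
    next
      case 4 then show ?thesis using cross[OF sy[OF e] 4(2,1)] by (simp add: P'_def2)
    qed
  qed
  have oddP: "odd (P' y - P' x)" if e: "E x y" for x y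
  proof -
    have "odd ((\<phi> y - \<phi> x) + (P' y - \<phi> y) - (P' x - \<phi> x))"
      using odd_edge[OF P ad e] Ppar[of x] Ppar[of y] by simp
    then show ?thesis by (simp add: algebra_simps)
  qed
  have adm: "admissible E V P'"
    unfolding admissible_def
  proof (intro allI impI)
    fix x y assume e: "E x y"
    show "V (P' y - P' x) < \<infinity>"
      using V_fin[OF P _ oddP[OF e] odd_edge[OF P ad e] edge[OF e]] ad e
      unfolding admissible_def by blast
  qed
  show ?thesis using edge oddP adm Pge unfolding P'_def by blast
qed

end
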